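(* The assignment $\epsilon_\Gamma$ described in the context is a well-defined functor $\mathcal{G}(E_{\Gamma_S})\to\mathcal{G}(\Gamma_S)$: it is independent of the E-path representing an E-chain, $\epsilon_\Gamma(\mathfrak c)$ is a morphism of $\mathcal G(\Gamma_S)$ from $\mathfrak e_0$ to $\mathfrak e_n$ for $\mathfrak c=(\mathfrak e_0,\dots,\mathfrak e_n)$, it preserves composition, and it is the identity on objects (so its object map is an order isomorphism). Moreover it commutes with restriction: for every E-chain $\mathfrak c$ with domain $\mathfrak e_0$ and every $h\in E$ with $h\,\omega\, e_0$, $\epsilon_\Gamma(\mathfrak h{\downharpoonleft}\mathfrak c)=\mathfrak h{\downharpoonleft}\epsilon_\Gamma(\mathfrak c)$, where $\mathfrak h=(Sh,hS)$ and the right-hand restriction is $(\rho_{hw},\lambda_{w'h})$ if $\epsilon_\Gamma(\mathfrak c)=(\rho_w,\lambda_{w'})$.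
   Context: Let $S$ be a regular semigroup and $E=E(S)$ its set of idempotents. On $E$: $e\,\omega^l f\iff ef=e$, $e\,\omega^r f\iff fe=e$, $\omega=\omega^l\cap\omega^r$; $\mathscr R,\mathscr L$ are Green's relations; $V(x)$ is the set of inverses of $x$. For $e,f\in E$ and $u\in eSf$ let $\rho(e,u,f)\colon Se\to Sf$, $t\mapsto tu$; for $w\in fSe$ let $\lambda(e,w,f)\colon eS\to fS$, $t\mapsto wt$. The groupoid $\mathcal{G}(\Gamma_S)$ has objects $\mathfrak e:=(Se,eS)$, $e\in E$, and morphisms from $(Se,eS)$ to $(Sf,fS)$ the pairs $(\rho_x,\lambda_{x'}):=(\rho(e,x,f),\lambda(e,x',f))$ with $x'\in V(x)$, $xx'=e$, $x'x=f$; composition $(\rho_x,\lambda_{x'})\ast(\rho_y,\lambda_{y'})=(\rho_{xy},\lambda_{y'x'})$; the restriction of $(\rho_x,\lambda_{x'})\colon\mathfrak e\to\mathfrak f$ to $\mathfrak g$ for $g\,\omega\,e$ is $(\rho_{gx},\lambda_{x'g})$. Let $E_{\Gamma_S}=\{(Se,eS):e\in E\}$, given the biordered-set structure transported from $E$ via $e\mapsto\mathfrak e$ (so $\mathfrak e\,\omega^l\,\mathfrak f$ iff $Se\subseteq Sf$, $\mathfrak e\,\omega^r\,\mathfrak f$ iff $eS\subseteq fS$, basic products $\mathfrak e\mathfrak f=(Sef,efS)$ when defined). An E-path is a finite sequence $(e_0,\dots,e_n)$ in $E$ with $e_{i-1}(\mathscr R\cup\mathscr L)e_i$ for all $i$;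 a vertex $e_i$ ($0<i<n$) is inessential if $e_{i-1}\mathscr R e_i\mathscr R e_{i+1}$ or $e_{i-1}\mathscr L e_i\mathscr L e_{i+1}$. E-chains are the classes of E-paths under the equivalence generated by inserting/deleting inessential vertices. $\mathcal G(E_{\Gamma_S})$ is the groupoid with objects $E_{\Gamma_S}$ and morphisms the E-chains $(\mathfrak e_0,\dots,\mathfrak e_n)$ from $\mathfrak e_0$ to $\mathfrak e_n$, with concatenation as composition. For an E-chain $\mathfrak c=(\mathfrak e_0,\dots,\mathfrak e_n)$ and $h\,\omega\, e_0$, $\mathfrak h{\downharpoonleft}\mathfrak c=\mathfrak h\cdot\mathfrak c:=(\mathfrak h,\mathfrak h_0,\mathfrak h_1,\dots,\mathfrak h_n)$ with $h_0=he_0$ and $h_i=e_ih_{i-1}e_i$. Define $\epsilon_\Gamma$ by $\epsilon_\Gamma(\mathfrak e)=\mathfrak e$ on objects and $\epsilon_\Gamma(\mathfrak e_0,\dots,\mathfrak e_n)=(\rho_w,\lambda_{w'})$ where $w=e_0e_1\cdots e_n$ and $w'=e_ne_{n-1}\cdots e_0$. *)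

theory Defs
  imports Main
begin

definition regular_semigroup :: "'a::semigroup_mult itself \<Rightarrow> bool" where
  "regular_semigroup _ \<longleftrightarrow> (\<forall>x::'a. \<exists>y. x * y * x = x)"

definition idem :: "'a::semigroup_mult \<Rightarrow> bool" where
  "idem e \<longleftrightarrow> e * e = e"

definition inverse_of :: "'a::semigroup_mult \<Rightarrow> 'a \<Rightarrow> bool" where
  "inverse_of x' x \<longleftrightarrow> x * x' * x = x \<and> x' * x * x' = x'"

definition lideal1 :: "'a::semigroup_mult \<Rightarrow> 'a set" where
  "lideal1 x = insert x {s * x | s. True}"
definition rideal1 :: "'a::semigroup_mult \<Rightarrow> 'a set" where
  "rideal1 x = insert x {x * s | s. True}"

definition greenR :: "'a::semigroup_mult \<Rightarrow> 'a \<Rightarrow> bool" where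
  "greenR x y \<longleftrightarrow> rideal1 x = rideal1 y"
definition greenL :: "'a::semigroup_mult \<Rightarrow> 'a \<Rightarrow> bool" where
  "greenL x y \<longleftrightarrow> lideal1 x = lideal1 y"

definition omega :: "'a::semigroup_mult \<Rightarrow> 'a \<Rightarrow> bool" where
  "omega e f \<longleftrightarrow> e * f = e \<and> f * e = e"

definition Sl :: "'a::semigroup_mult \<Rightarrow> 'a set" where
  "Sl e = {s * e | s. True}"
definition Sr :: "'a::semigroup_mult \<Rightarrow> 'a set" where
  "Sr e = {e * s | s. True}"

definition obj :: "'a::semigroup_mult \<Rightarrow> 'a set \<times> 'a set" where
  "obj e = (Sl e, Sr e)"

text \<open>A map is represented by (domain, codomain, function restricted to domain).\<close>
type_synonym 'a smap = "'a set \<times> 'a set \<times> ('a \<Rightarrow> 'a)"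

definition rho :: "'a::semigroup_mult \<Rightarrow> 'a \<Rightarrow> 'a \<Rightarrow> 'a smap" where
  "rho e u f = (Sl e, Sl f, (\<lambda>t. if t \<in> Sl e then t * u else undefined))"
definition lam :: "'a::semigroup_mult \<Rightarrow> 'a \<Rightarrow> 'a \<Rightarrow> 'a smap" where
  "lam e w f = (Sr e, Sr f, (\<lambda>t. if t \<in> Sr e then w * t else undefined))"

type_synonym 'a gmor = "'a smap \<times> 'a smap"

text \<open>(rho_x, lambda_x') as a morphism from (Se,eS) to (Sf,fS).\<close>
definition gmor :: "'a::semigroup_mult \<Rightarrow> 'a \<Rightarrow> 'a \<Rightarrow> 'a \<Rightarrow> 'a gmor" where
  "gmor e x x' f = (rho e x f, lam e x' f)"

definition GMor :: "'a::semigroup_mult \<Rightarrow> 'a \<Rightarrow> 'a gmor set" where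
  "GMor e f = {gmor e x x' f | x x'. inverse_of x' x \<and> x * x' = e \<and> x' * x = f}"

definition epath :: "'a::semigroup_mult list \<Rightarrow> bool" where
  "epath p \<longleftrightarrow> p \<noteq> [] \<and> (\<forall>x\<in>set p. idem x) \<and>
     (\<forall>i. Suc i < length p \<longrightarrow> greenR (p ! i) (p ! Suc i) \<or> greenL (p ! i) (p ! Suc i))"

definition del_inessential :: "'a::semigroup_mult list \<Rightarrow> 'a list \<Rightarrow> bool" where
  "del_inessential p q \<longleftrightarrow> epath p \<and>
     (\<exists>as x y z bs. p = as @ [x, y, z] @ bs \<and> q = as @ [x, z] @ bs \<and>
        ((greenR x y \<and> greenR y z) \<or> (greenL x y \<and> greenL y z)))"

definition echain_equiv :: "'a::semigroup_mult list \<Rightarrow> 'a list \<Rightarrow> bool" where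
  "echain_equiv = (\<lambda>p q. del_inessential p q \<or> del_inessential q p)\<^sup>*\<^sup>*"

fun lprod :: "'a::semigroup_mult list \<Rightarrow> 'a" where
  "lprod [] = undefined"
| "lprod [x] = x"
| "lprod (x # y # xs) = x * lprod (y # xs)"

definition eps :: "'a::semigroup_mult list \<Rightarrow> 'a gmor" where
  "eps p = gmor (hd p) (lprod p) (lprod (rev p)) (last p)"

text \<open>Restriction h|c = (h, h_0, ..., h_n), h_0 = h e_0, h_i = e_i h_{i-1} e_i.\<close>
fun rseq :: "'a::semigroup_mult \<Rightarrow> 'a list \<Rightarrow> 'a list" where
  "rseq h [] = []"
| "rseq h (e # es) = (let h' = e * h * e in h' # rseq h' es)"

fun restr :: "'a::semigroup_mult \<Rightarrow> 'a list \<Rightarrow> 'a list" where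
  "restr h [] = []"
| "restr h (e0 # es) = h # (h * e0) # rseq (h * e0) es"

end

theory Submission
  imports Defs
begin

fun chain :: "'a::semigroup_mult list \<Rightarrow> bool" where
  "chain [] = True"
| "chain [x] = idem x"
| "chain (x # y # xs) = (idem x \<and> (greenR x y \<or> greenL x y) \<and> chain (y # xs))"

lemma all_nat_split: "(\<forall>i::nat. Q i) \<longleftrightarrow> Q 0 \<and> (\<forall>i. Q (Suc i))"
  by (metis not0_implies_Suc)

lemma chain_iff: "chain p \<longleftrightarrow> (\<forall>x\<in>set p. idem x) \<and>
     (\<forall>i. Suc i < length p \<longrightarrow> greenR (p ! i) (p ! Suc i) \<or> greenL (p ! i) (p ! Suc i))"
proof (induction p rule: chain.induct)
  case (3 x y xs)
  show ?case
    apply (subst all_nat_split)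
    using 3 by auto
qed auto

lemma epath_chain: "epath p \<longleftrightarrow> p \<noteq> [] \<and> chain p"
  unfolding epath_def chain_iff by auto

lemma chain_snoc: "xs \<noteq> [] \<Longrightarrow> chain (xs @ [b]) \<longleftrightarrow> chain xs \<and> idem b \<and> (greenR (last xs) b \<or> greenL (last xs) b)"
  by (induction xs rule: chain.induct) auto

lemma chain_butlast: "chain (xs @ ys) \<Longrightarrow> chain xs"
  by (induction xs rule: chain.induct) (auto simp: Cons_eq_append_conv, cases ys, auto)

lemma greenR_idem:
  assumes xi: "idem x" and yi: "idem y"
  shows "greenR x y \<longleftrightarrow> x * y = y \<and> y * x = x"
proof
  assume "greenR x y"
  then have e: "rideal1 x = rideal1 y" unfolding greenR_def .
  then have a: "y \<in> rideal1 x" and b: "x \<in> rideal1 y" unfolding rideal1_def by auto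
  from a obtain s where "y = x \<or> y = x * s" unfolding rideal1_def by auto
  then have 1: "x * y = y" using xi by (auto simp: idem_def mult.assoc[symmetric])
  from b obtain t where "x = y \<or> x = y * t" unfolding rideal1_def by auto
  then have "y * x = x" using yi by (auto simp: idem_def mult.assoc[symmetric])
  with 1 show "x * y = y \<and> y * x = x" by simp
next
  assume "x * y = y \<and> y * x = x"
  then have h: "x * y = y" "y * x = x" by auto
  have "rideal1 x \<subseteq> rideal1 y"
  proof
    fix z assume "z \<in> rideal1 x"
    then obtain s where "z = x \<or> z = x * s" unfolding rideal1_def by auto
    then have "z = y * x \<or> z = y * (x * s)" using h by (metis mult.assoc)
    then show "z \<in> rideal1 y" unfolding rideal1_def by blast
  qed
  moreover have "rideal1 y \<subseteq> rideal1 x"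
  proof
    fix z assume "z \<in> rideal1 y"
    then obtain s where "z = y \<or> z = y * s" unfolding rideal1_def by auto
    then have "z = x * y \<or> z = x * (y * s)" using h by (metis mult.assoc)
    then show "z \<in> rideal1 x" unfolding rideal1_def by blast
  qed
  ultimately show "greenR x y" unfolding greenR_def by blast
qed

lemma greenL_idem:
  assumes xi: "idem x" and yi: "idem y"
  shows "greenL x y \<longleftrightarrow> x * y = x \<and> y * x = y"
proof
  assume "greenL x y"
  then have e: "lideal1 x = lideal1 y" unfolding greenL_def .
  then have a: "y \<in> lideal1 x" and b: "x \<in> lideal1 y" unfolding lideal1_def by auto
  from a obtain s where "y = x \<or> y = s * x" unfolding lideal1_def by auto
  then have 1: "y * x = y" using xi by (auto simp: idem_def mult.assoc)
  from b obtain t where "x = y \<or> x = t * y" unfolding lideal1_def by auto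
  then have "x * y = x" using yi by (auto simp: idem_def mult.assoc)
  with 1 show "x * y = x \<and> y * x = y" by simp
next
  assume "x * y = x \<and> y * x = y"
  then have h: "x * y = x" "y * x = y" by auto
  have "lideal1 x \<subseteq> lideal1 y"
  proof
    fix z assume "z \<in> lideal1 x"
    then obtain s where "z = x \<or> z = s * x" unfolding lideal1_def by auto
    then have "z = x * y \<or> z = (s * x) * y" using h by (metis mult.assoc)
    then show "z \<in> lideal1 y" unfolding lideal1_def by blast
  qed
  moreover have "lideal1 y \<subseteq> lideal1 x"
  proof
    fix z assume "z \<in> lideal1 y"
    then obtain s where "z = y \<or> z = s * y" unfolding lideal1_def by auto
    then have "z = y * x \<or> z = (s * y) * x" using h by (metis mult.assoc)
    then show "z \<in> lideal1 x" unfolding lideal1_def by blast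
  qed
  ultimately show "greenL x y" unfolding greenL_def by blast
qed

lemma rel_efe: "idem e \<Longrightarrow> idem f \<Longrightarrow> greenR e f \<or> greenL e f \<Longrightarrow> e * f * e = e \<and> f * e * f = f"
  by (auto simp: greenR_idem greenL_idem idem_def)

lemma lprod_Cons: "xs \<noteq> [] \<Longrightarrow> lprod (x # xs) = x * lprod xs"
  by (cases xs) auto

lemma lprod_append: "xs \<noteq> [] \<Longrightarrow> ys \<noteq> [] \<Longrightarrow> lprod (xs @ ys) = lprod xs * lprod ys"
  by (induction xs rule: lprod.induct) (auto simp: lprod_Cons mult.assoc)

lemma lprod_snoc: "xs \<noteq> [] \<Longrightarrow> lprod (xs @ [a]) = lprod xs * a"
  by (simp add: lprod_append)

lemma hd_lprod: "p \<noteq> [] \<Longrightarrow> idem (hd p) \<Longrightarrow> hd p * lprod p = lprod p"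
  by (cases p rule: lprod.cases) (auto simp: idem_def mult.assoc[symmetric])

lemma lprod_last: "p \<noteq> [] \<Longrightarrow> idem (last p) \<Longrightarrow> lprod p * last p = lprod p"
proof (induction p rule: rev_induct)
  case (snoc x xs) then show ?case
    by (cases "xs = []") (auto simp: lprod_snoc idem_def mult.assoc)
qed simp


lemma idem_left: "idem f \<Longrightarrow> f * (f * z) = f * z"
  by (simp add: idem_def mult.assoc[symmetric])

lemma chain_prod: "chain p \<Longrightarrow> p \<noteq> [] \<Longrightarrow>
   lprod p * lprod (rev p) = hd p \<and> lprod (rev p) * lprod p = last p"
proof (induction p rule: rev_induct)
  case (snoc f xs)
  show ?case
  proof (cases "xs = []")
    case True then show ?thesis using snoc.prems by (simp add: idem_def)
  next
    case False
    have cx: "chain xs" and fi: "idem f" and r: "greenR (last xs) f \<or> greenL (last xs) f"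
      using snoc.prems chain_snoc[OF False] by auto
    have ax: "\<forall>x\<in>set xs. idem x" using cx chain_iff by blast
    define e where "e = last xs"
    have ei: "idem e" using ax False e_def by simp
    define w where "w = lprod xs"
    define w' where "w' = lprod (rev xs)"
    have IH: "w * w' = hd xs" "w' * w = e" using snoc.IH[OF cx False] w_def w'_def e_def by auto
    have we: "w * e = w" using lprod_last[OF False] ei e_def w_def by simp
    have ew: "e * w' = w'" using hd_lprod[of "rev xs"] False ei e_def w'_def by (simp add: hd_rev)
    have efe: "e * f * e = e" "f * e * f = f" using rel_efe[OF ei fi] r e_def by auto
    have l1: "lprod (xs @ [f]) = w * f" using lprod_snoc[OF False] w_def by simp
    have l2: "lprod (rev (xs @ [f])) = f * w'" using lprod_Cons[of "rev xs" f] False w'_def by simp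
    have g1: "(w * f) * (f * w') = w * w'"
    proof -
      have "(w * f) * (f * w') = w * (f * (f * w'))" by (simp add: mult.assoc)
      also have "\<dots> = w * (f * w')" using idem_left[OF fi] by simp
      also have "\<dots> = (w * e) * f * (e * w')" using we ew by (simp add: mult.assoc)
      also have "\<dots> = w * (e * f * e) * w'" by (simp add: mult.assoc)
      also have "\<dots> = w * w'" using efe we by (simp add: mult.assoc)
      finally show ?thesis .
    qed
    have g2: "(f * w') * (w * f) = f"
    proof -
      have "(f * w') * (w * f) = f * (w' * w) * f" by (simp add: mult.assoc)
      also have "\<dots> = f" using IH efe by simp
      finally show ?thesis .
    qed
    show ?thesis using l1 l2 g1 g2 IH False by (simp add: hd_append)
  qed
qed simp

lemma eps_mor: "epath p \<Longrightarrow> eps p \<in> GMor (hd p) (last p)"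
proof -
  assume ep: "epath p"
  then have ne: "p \<noteq> []" and c: "chain p" using epath_chain by auto
  have ax: "\<forall>x\<in>set p. idem x" using c chain_iff by blast
  have hi: "idem (hd p)" and li: "idem (last p)" using ax ne by auto
  define w where "w = lprod p"
  define w' where "w' = lprod (rev p)"
  have P: "w * w' = hd p" "w' * w = last p" using chain_prod[OF c ne] w_def w'_def by auto
  have a1: "hd p * w = w" using hd_lprod[OF ne hi] w_def by simp
  have a2: "last p * w' = w'" using hd_lprod[of "rev p"] ne li w'_def by (simp add: hd_rev)
  have inv: "inverse_of w' w" unfolding inverse_of_def using P a1 a2 by simp
  show ?thesis unfolding eps_def GMor_def using inv P w_def w'_def by blast
qed

lemma gmor_inj:
  assumes "gmor e x x' f = gmor e y y' f" "idem e"
  shows "e * x = e * y \<and> x' * e = y' * e"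
proof -
  have ee: "e \<in> Sl e" "e \<in> Sr e" using assms(2) unfolding Sl_def Sr_def idem_def by (auto intro: exI[of _ e])
  from assms(1) have "snd (snd (rho e x f)) e = snd (snd (rho e y f))  e"
    "snd (snd (lam e x' f)) e = snd (snd (lam e y' f)) e"
    unfolding gmor_def by auto
  then show ?thesis using ee unfolding rho_def lam_def by auto
qed


lemma eps_eq_prod:
  assumes ep: "epath p" and inv: "inverse_of x' x" and h1: "x * x' = hd p" and h2: "x' * x = last p"
    and eq: "eps p = gmor (hd p) x x' (last p)"
  shows "x = lprod p \<and> x' = lprod (rev p)"
proof -
  have ne: "p \<noteq> []" and c: "chain p" using ep epath_chain by auto
  have ax: "\<forall>x\<in>set p. idem x" using c chain_iff by blast
  have hi: "idem (hd p)" and li: "idem (last p)" using ax ne by auto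
  have "gmor (hd p) (lprod p) (lprod (rev p)) (last p) = gmor (hd p) x x' (last p)"
    using eq unfolding eps_def by simp
  from gmor_inj[OF this hi] have g: "hd p * lprod p = hd p * x" "lprod (rev p) * hd p = x' * hd p" by auto
  have a1: "hd p * lprod p = lprod p" using hd_lprod[OF ne hi] .
  have a2: "lprod (rev p) * hd p = lprod (rev p)" using lprod_last[of "rev p"] ne hi by (simp add: last_rev)
  have b1: "hd p * x = x" using inv h1 unfolding inverse_of_def by metis
  have b2: "x' * hd p = x'" using inv h1 unfolding inverse_of_def by (metis mult.assoc)
  show ?thesis using g a1 a2 b1 b2 by simp
qed

lemma lprod_del: "x * y * z = x * z \<Longrightarrow> lprod (as @ [x, y, z] @ bs) = lprod (as @ [x, z] @ bs)"
proof (induction as)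
  case Nil
  then show ?case by (cases bs) (auto simp: lprod_Cons mult.assoc, metis mult.assoc)
next
  case (Cons a as)
  then show ?case by (simp add: lprod_Cons)
qed

lemma del_eps: "del_inessential p q \<Longrightarrow> eps p = eps q"
proof -
  assume d: "del_inessential p q"
  then have ep: "epath p" unfolding del_inessential_def by blast
  from d obtain as x y z bs where pq: "p = as @ [x, y, z] @ bs" "q = as @ [x, z] @ bs"
    and r: "(greenR x y \<and> greenR y z) \<or> (greenL x y \<and> greenL y z)"
    unfolding del_inessential_def by blast
  have c: "chain p" using ep epath_chain by auto
  have ax: "\<forall>x\<in>set p. idem x" using c chain_iff by blast
  have xi: "idem x" "idem y" "idem z" using ax pq by auto
  have k: "x * y * z = x * z \<and> z * y * x = z * x"
    using r xi by (auto simp: greenR_idem greenL_idem mult.assoc; metis mult.assoc)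
  have 1: "lprod p = lprod q" using lprod_del[of x y z as bs] k pq by simp
  have 2: "lprod (rev p) = lprod (rev q)" using lprod_del[of z y x "rev bs" "rev as"] k pq by simp
  have 3: "hd p = hd q" "last p = last q" using pq by (cases as; simp)+
  show ?thesis unfolding eps_def using 1 2 3 by simp
qed

lemma equiv_eps: "echain_equiv p q \<Longrightarrow> eps p = eps q"
  unfolding echain_equiv_def
proof (induction rule: rtranclp_induct)
  case (step y z) then show ?case using del_eps by metis
qed simp


lemma comp_eps:
  assumes ep: "epath p" and eq: "epath q" and pq: "last p = hd q"
    and ix: "inverse_of x' x" "x * x' = hd p" "x' * x = last p"
    and iy: "inverse_of y' y" "y * y' = hd q" "y' * y = last q"
    and e1: "eps p = gmor (hd p) x x' (last p)" and e2: "eps q = gmor (hd q) y y' (last q)"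
  shows "eps (p @ tl q) = gmor (hd p) (x * y) (y' * x') (last q)"
proof -
  have X: "x = lprod p" "x' = lprod (rev p)" using eps_eq_prod[OF ep ix e1] by auto
  have Y: "y = lprod q" "y' = lprod (rev q)" using eps_eq_prod[OF eq iy e2] by auto
  have ne: "p \<noteq> []" "q \<noteq> []" using ep eq epath_chain by auto
  have axp: "\<forall>x\<in>set p. idem x" using ep epath_chain chain_iff by blast
  have li: "idem (last p)" using axp ne by auto
  have a1: "lprod p * last p = lprod p" using lprod_last[OF ne(1) li] .
  have a2: "last p * lprod (rev p) = lprod (rev p)" using hd_lprod[of "rev p"] ne li by (simp add: hd_rev)
  obtain a t where qa: "q = a # t" using ne(2) by (cases q) auto
  have aa: "a = last p" using pq qa by simp
  show ?thesis
  proof (cases "t = []")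
    case True
    then show ?thesis using qa aa X Y a1 a2 e1 by simp
  next
    case False
    have l1: "lprod (p @ tl q) = x * y"
      using qa False X Y lprod_append[OF ne(1) False] lprod_Cons[OF False, of a] aa a1
      by (simp add: mult.assoc[symmetric])
    have l2: "lprod (rev (p @ tl q)) = y' * x'"
      using qa False X Y lprod_append[of "rev t" "rev p"] ne lprod_snoc[of "rev t" a] aa a2
      by (simp add: mult.assoc)
    have h: "hd (p @ tl q) = hd p" "last (p @ tl q) = last q" using ne qa False by auto
    show ?thesis unfolding eps_def using l1 l2 h by simp
  qed
qed

definition LL :: "'a::semigroup_mult \<Rightarrow> 'a list \<Rightarrow> 'a list" where
  "LL h p = (h * hd p) # rseq (h * hd p) (tl p)"

lemma rseq_snoc: "rseq a (es @ [e]) = rseq a es @ [e * last (a # rseq a es) * e]"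
  by (induction es arbitrary: a) (auto simp: Let_def)

lemma LL_snoc: "xs \<noteq> [] \<Longrightarrow> LL h (xs @ [f]) = LL h xs @ [f * last (LL h xs) * f]"
  unfolding LL_def by (cases xs) (auto simp: rseq_snoc)

lemma restr_LL: "p \<noteq> [] \<Longrightarrow> restr h p = h # LL h p"
  unfolding LL_def by (cases p) auto

lemma restr_main:
  assumes "chain p" "p \<noteq> []" "idem h" "omega h (hd p)"
  shows "chain (LL h p) \<and> omega (last (LL h p)) (last p) \<and>
     last (LL h p) = lprod (rev p) * h * lprod p \<and> lprod (LL h p) = h * lprod p \<and>
     lprod (rev (LL h p)) = lprod (rev p) * h"
  using assms
proof (induction p rule: rev_induct)
  case Nil then show ?case by simp
next
  case (snoc f xs)
  show ?case
  proof (cases "xs = []")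
    case True
    then show ?thesis using snoc.prems
      by (auto simp: LL_def omega_def mult.assoc)
  next
    case False
    have cx: "chain xs" and fi: "idem f" and r: "greenR (last xs) f \<or> greenL (last xs) f"
      using snoc.prems chain_snoc[OF False] by auto
    have hx: "omega h (hd xs)" using snoc.prems False by simp
    note IH = snoc.IH[OF cx False snoc.prems(3) hx]
    have ax: "\<forall>x\<in>set xs. idem x" using cx chain_iff by blast
    define e where "e = last xs"
    have ei: "idem e" using ax False e_def by simp
    define w where "w = lprod xs"
    define w' where "w' = lprod (rev xs)"
    define g where "g = last (LL h xs)"
    define P where "P = lprod (LL h xs)"
    define Q where "Q = lprod (rev (LL h xs))"
    have nL: "LL h xs \<noteq> []" unfolding LL_def by simp
    have cL: "chain (LL h xs)" using IH by simp
    have gi: "idem g" using cL chain_iff[of "LL h xs"] nL g_def last_in_set by blast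
    have ge: "g * e = g" "e * g = g" using IH g_def e_def unfolding omega_def by auto
    have gv: "g = w' * h * w" "P = h * w" "Q = w' * h" using IH g_def w_def w'_def P_def Q_def by auto
    have efe: "e * f * e = e" "f * e * f = f" using rel_efe[OF ei fi] r e_def by auto
    have Pg: "P * g = P" using lprod_last[OF nL] gi g_def P_def by simp
    have gQ: "g * Q = Q" using hd_lprod[of "rev (LL h xs)"] nL gi g_def Q_def by (simp add: hd_rev last_rev)
    define g' where "g' = f * g * f"
    have Lsn: "LL h (xs @ [f]) = LL h xs @ [g']" using LL_snoc[OF False] g_def g'_def by simp
    have fii: "f * f = f" using fi idem_def by auto
    have gii: "g * g = g" using gi idem_def by auto
    have rel: "idem g' \<and> (greenR g g' \<or> greenL g g')"
      using r
    proof
      assume R: "greenR (last xs) f"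
      then have ef: "e * f = f" "f * e = e" using greenR_idem ei fi e_def by auto
      have fg: "f * g = g" using ef ge by (metis mult.assoc)
      have g'e: "g' = g * f" using fg g'_def by simp
      have "g' * g' = g'" using g'e fg gii by (metis mult.assoc)
      moreover have "g * g' = g'" using g'e gii by (metis mult.assoc)
      moreover have "g' * g = g" using g'e ef ge gii by (metis mult.assoc)
      ultimately show ?thesis using greenR_idem gi unfolding idem_def by blast
    next
      assume L: "greenL (last xs) f"
      then have ef: "e * f = e" "f * e = f" using greenL_idem ei fi e_def by auto
      have gf: "g * f = g" using ef ge by (metis mult.assoc)
      have g'e: "g' = f * g" using gf g'_def by (metis mult.assoc)
      have "g' * g' = g'" using g'e gf gii by (metis mult.assoc)
      moreover have "g * g' = g" using g'e gf gii by (metis mult.assoc)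
      moreover have "g' * g = g'" using g'e gii by (metis mult.assoc)
      ultimately show ?thesis using greenL_idem gi unfolding idem_def by blast
    qed
    have c1: "chain (LL h (xs @ [f]))" using Lsn cL rel chain_snoc[OF nL] g_def by simp
    have c2: "omega g' f" unfolding omega_def g'_def using fii by (metis mult.assoc)
    have l1: "lprod (xs @ [f]) = w * f" using lprod_snoc[OF False] w_def by simp
    have l2: "lprod (rev (xs @ [f])) = f * w'" using lprod_Cons[of "rev xs" f] False w'_def by simp
    have c3: "g' = (f * w') * h * (w * f)" using g'_def gv by (simp add: mult.assoc)
    have Pe: "P * e = P" using Pg ge by (metis mult.assoc)
    have c4: "P * g' = h * (w * f)"
    proof -
      have "P * g' = P * e * f * e * g * f" using Pe g'_def ge by (simp add: mult.assoc)
      also have "\<dots> = P * g * f" using efe Pe by (metis mult.assoc)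
      also have "\<dots> = h * (w * f)" using Pg gv by (simp add: mult.assoc)
      finally show ?thesis .
    qed
    have eQ: "e * Q = Q" using gQ ge by (metis mult.assoc)
    have c5: "g' * Q = (f * w') * h"
    proof -
      have "g' * Q = f * g * e * f * e * Q" using eQ g'_def ge by (simp add: mult.assoc)
      also have "\<dots> = f * g * Q" using efe eQ ge by (metis mult.assoc)
      also have "\<dots> = (f * w') * h" using gQ gv by (simp add: mult.assoc)
      finally show ?thesis .
    qed
    have r1: "lprod (LL h (xs @ [f])) = P * g'" using Lsn lprod_snoc[OF nL] P_def by simp
    have r2: "lprod (rev (LL h (xs @ [f]))) = g' * Q" using Lsn lprod_Cons[of "rev (LL h xs)" g'] nL Q_def by simp
    show ?thesis using c1 c2 c3 c4 c5 r1 r2 l1 l2 Lsn by simp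
  qed
qed


lemma restr_eps:
  assumes ep: "epath p" and hi: "idem h" and om: "omega h (hd p)"
    and ix: "inverse_of x' x" "x * x' = hd p" "x' * x = last p"
    and e1: "eps p = gmor (hd p) x x' (last p)"
  shows "epath (restr h p) \<and> eps (restr h p) = gmor h (h * x) (x' * h) (x' * h * x)"
proof -
  have X: "x = lprod p" "x' = lprod (rev p)" using eps_eq_prod[OF ep ix e1] by auto
  have ne: "p \<noteq> []" and c: "chain p" using ep epath_chain by auto
  note M = restr_main[OF c ne hi om]
  have hh: "h * hd p = h" using om omega_def by auto
  have hii: "h * h = h" using hi idem_def by auto
  have R: "restr h p = h # LL h p" using restr_LL[OF ne] .
  obtain rest where Lr: "LL h p = h # rest" unfolding LL_def using hh by simp
  have gR: "greenR h h" unfolding greenR_def by simp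
  have ch: "chain (restr h p)" using R Lr M hi gR by simp
  have ep2: "epath (restr h p)" using ch R epath_chain[of "restr h p"] by simp
  have p1: "lprod (restr h p) = h * x" using R M X lprod_Cons[of "LL h p" h] hii Lr
    by (simp add: mult.assoc[symmetric])
  have p2: "lprod (rev (restr h p)) = x' * h" using R M X lprod_snoc[of "rev (LL h p)" h] hii Lr
    by (simp add: mult.assoc)
  have p3: "last (restr h p) = x' * h * x" using R M X Lr by simp
  show ?thesis using ep2 p1 p2 p3 R unfolding eps_def by simp
qed

theorem mainTheorem4:
  fixes S :: "'a::semigroup_mult itself"
  assumes reg: "regular_semigroup S"
  shows
    \<comment> \<open>independence of the representing E-path\<close>
    "(\<forall>p q :: 'a list. epath p \<and> echain_equiv p q \<longrightarrow> eps p = eps q)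
   \<and> \<comment> \<open>eps(c) is a morphism from e_0 to e_n\<close>
     (\<forall>p :: 'a list. epath p \<longrightarrow> eps p \<in> GMor (hd p) (last p))
   \<and> \<comment> \<open>identities (trivial chains) go to identities\<close>
     (\<forall>e :: 'a. idem e \<longrightarrow> eps [e] = gmor e e e e)
   \<and> \<comment> \<open>preserves composition\<close>
     (\<forall>(p :: 'a list) q x x' y y'. epath p \<and> epath q \<and> last p = hd q \<and>
        inverse_of x' x \<and> x * x' = hd p \<and> x' * x = last p \<and>
        inverse_of y' y \<and> y * y' = hd q \<and> y' * y = last q \<and>
        eps p = gmor (hd p) x x' (last p) \<and> eps q = gmor (hd q) y y' (last q) \<longrightarrow>
        eps (p @ tl q) = gmor (hd p) (x * y) (y' * x') (last q))
   \<and> \<comment> \<open>commutes with restriction\<close>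
     (\<forall>(p :: 'a list) h x x'. epath p \<and> idem h \<and> omega h (hd p) \<and>
        inverse_of x' x \<and> x * x' = hd p \<and> x' * x = last p \<and>
        eps p = gmor (hd p) x x' (last p) \<longrightarrow>
        epath (restr h p) \<and>
        eps (restr h p) = gmor h (h * x) (x' * h) (x' * h * x))"
proof (intro conjI allI impI)
  fix p q :: "'a list"
  assume "epath p \<and> echain_equiv p q"
  then show "eps p = eps q" using equiv_eps by blast
next
  fix p :: "'a list"
  assume "epath p" then show "eps p \<in> GMor (hd p) (last p)" by (rule eps_mor)
next
  fix e :: 'a
  show "eps [e] = gmor e e e e" unfolding eps_def by simp
next
  fix p q :: "'a list" and x x' y y'
  assume "epath p \<and> epath q \<and> last p = hd q \<and>
        inverse_of x' x \<and> x * x' = hd p \<and> x' * x = last p \<and>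
        inverse_of y' y \<and> y * y' = hd q \<and> y' * y = last q \<and>
        eps p = gmor (hd p) x x' (last p) \<and> eps q = gmor (hd q) y y' (last q)"
  then show "eps (p @ tl q) = gmor (hd p) (x * y) (y' * x') (last q)"
    using comp_eps by blast
next
  fix p :: "'a list" and h x x'
  assume a: "epath p \<and> idem h \<and> omega h (hd p) \<and>
        inverse_of x' x \<and> x * x' = hd p \<and> x' * x = last p \<and>
        eps p = gmor (hd p) x x' (last p)"
  then show "epath (restr h p)" using restr_eps by blast
  from a show "eps (restr h p) = gmor h (h * x) (x' * h) (x' * h * x)" using restr_eps by blast
qed

end
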